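(* Let $r\geq 1$, $k\geq 3$, $1\le d\le r$, and let $I_d\subseteq\{1,\dots,r\}$ with $|I_d|=d$. Then for every $n\geq k+1$, every $m$ with $2\leq m\leq k-1$, and every $\phi\in T_{k,r}^m(I_d)$, $$\bigl|S_n^{(r)}\bigl(T_{k,r}^m(I_d);\phi\bigr)\bigr|=\prod_{j=k+1}^n\bigl(d(k-1)+(r-d)j\bigr).$$
   Context: For $n,r\ge1$, $S_n^{(r)}$ denotes the set of coloured permutations of length $n$ with $r$ colours: sequences $\phi=(\phi_1,\dots,\phi_n)$ where $\phi_i=a_i^{(c_i)}$, $(a_1,\dots,a_n)$ is a permutation of $\{1,\dots,n\}$ and each $c_i\in\{1,\dots,r\}$ is the colour of $a_i$. For $\phi=(\tau_1^{(s_1)},\dots,\tau_k^{(s_k)})\in S_k^{(r)}$ and $\psi=(\alpha_1^{(v_1)},\dots,\alpha_n^{(v_n)})\in S_n^{(r)}$, an occurrence of $\phi$ in $\psi$ is a sequence of indices $1\le i_1<\dots<i_k\le n$ such that $(\alpha_{i_1},\dots,\alpha_{i_k})$ is order-isomorphic to $(\tau_1,\dots,\tau_k)$ and $v_{i_j}=s_j$ for all $j$. $\psi$ contains $\phi$ if there is at least one occurrence, and avoids $\phi$ otherwise; $\psi$ contains $\phi$ exactly once if there is exactly one occurrence. For $I_d\subseteq\{1,\dots,r\}$ with $|I_d|=d$ and $1\le m\le k$, $T_{k,r}^m(I_d)$ is the set of all $\phi\in S_k^{(r)}$ whose first entry is $\phi_1=m^{(c)}$ for some colour $c\in I_d$.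 For $\phi\in T_{k,r}^m(I_d)$, $S_n^{(r)}(T_{k,r}^m(I_d);\phi)$ denotes the set of $\psi\in S_n^{(r)}$ that avoid every pattern in $T_{k,r}^m(I_d)\setminus\{\phi\}$ and contain $\phi$ exactly once. *)

theory Defs
  imports Main
begin

text \<open>A coloured permutation is a list of pairs (a, c): entry value a and colour c.
  Positions are 0-indexed in lists.\<close>

definition coloured_perms :: "nat \<Rightarrow> nat \<Rightarrow> (nat \<times> nat) list set" where
  "coloured_perms n r = {\<psi>. length \<psi> = n \<and> distinct (map fst \<psi>) \<and> set (map fst \<psi>) = {1..n}
       \<and> (\<forall>x\<in>set \<psi>. snd x \<in> {1..r})}"

definition occurrences :: "(nat \<times> nat) list \<Rightarrow> (nat \<times> nat) list \<Rightarrow> nat list set" where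
  "occurrences \<phi> \<psi> = {is. length is = length \<phi> \<and> sorted_wrt (<) is
       \<and> (\<forall>i\<in>set is. i < length \<psi>)
       \<and> (\<forall>j<length \<phi>. \<forall>l<length \<phi>.
             (fst (\<psi> ! (is ! j)) < fst (\<psi> ! (is ! l)) \<longleftrightarrow> fst (\<phi> ! j) < fst (\<phi> ! l)))
       \<and> (\<forall>j<length \<phi>. snd (\<psi> ! (is ! j)) = snd (\<phi> ! j))}"

definition contains :: "(nat \<times> nat) list \<Rightarrow> (nat \<times> nat) list \<Rightarrow> bool" where
  "contains \<psi> \<phi> \<longleftrightarrow> occurrences \<phi> \<psi> \<noteq> {}"

definition avoids :: "(nat \<times> nat) list \<Rightarrow> (nat \<times> nat) list \<Rightarrow> bool" where
  "avoids \<psi> \<phi> \<longleftrightarrow> \<not> contains \<psi> \<phi>"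

definition contains_once :: "(nat \<times> nat) list \<Rightarrow> (nat \<times> nat) list \<Rightarrow> bool" where
  "contains_once \<psi> \<phi> \<longleftrightarrow> card (occurrences \<phi> \<psi>) = 1"

definition T_set :: "nat \<Rightarrow> nat \<Rightarrow> nat \<Rightarrow> nat set \<Rightarrow> (nat \<times> nat) list set" where
  "T_set k r m I = {\<phi> \<in> coloured_perms k r. fst (hd \<phi>) = m \<and> snd (hd \<phi>) \<in> I}"

definition S_set :: "nat \<Rightarrow> nat \<Rightarrow> (nat \<times> nat) list set \<Rightarrow> (nat \<times> nat) list \<Rightarrow> (nat \<times> nat) list set" where
  "S_set n r T \<phi> = {\<psi> \<in> coloured_perms n r. (\<forall>\<tau>\<in>T - {\<phi>}. avoids \<psi> \<tau>) \<and> contains_once \<psi> \<phi>}"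

end

theory Submission
  imports Defs
begin

definition smaller :: "(nat \<times> nat) list \<Rightarrow> nat \<Rightarrow> nat set" where
  "smaller \<psi> i = {j. i < j \<and> j < length \<psi> \<and> fst (\<psi> ! j) < fst (\<psi> ! i)}"

definition larger :: "(nat \<times> nat) list \<Rightarrow> nat \<Rightarrow> nat set" where
  "larger \<psi> i = {j. i < j \<and> j < length \<psi> \<and> fst (\<psi> ! i) < fst (\<psi> ! j)}"

definition good :: "nat set \<Rightarrow> nat \<Rightarrow> nat \<Rightarrow> (nat \<times> nat) list \<Rightarrow> nat \<Rightarrow> bool" where
  "good I m k \<psi> i \<longleftrightarrow> i < length \<psi> \<and> snd (\<psi> ! i) \<in> I \<and> m - 1 \<le> card (smaller \<psi> i)
      \<and> k - m \<le> card (larger \<psi> i)"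

lemma cp_basic:
  assumes "\<psi> \<in> coloured_perms n r"
  shows "length \<psi> = n" "distinct (map fst \<psi>)" "set (map fst \<psi>) = {1..n}"
    "\<And>j. j < n \<Longrightarrow> snd (\<psi> ! j) \<in> {1..r}"
    "\<And>j. j < n \<Longrightarrow> fst (\<psi> ! j) \<in> {1..n}"
  using assms unfolding coloured_perms_def
  by (auto simp: nth_mem)

lemma cp_inj:
  assumes "\<psi> \<in> coloured_perms n r" "j < n" "l < n" "fst (\<psi> ! j) = fst (\<psi> ! l)"
  shows "j = l"
proof -
  have "map fst \<psi> ! j = map fst \<psi> ! l" using assms cp_basic(1)[OF assms(1)] by simp
  then show ?thesis using nth_eq_iff_index_eq[OF cp_basic(2)[OF assms(1)]] assms cp_basic(1)[OF assms(1)]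
    by simp
qed

lemma cp_count:
  assumes "\<psi> \<in> coloured_perms n r"
  shows "card {l. l < n \<and> P (fst (\<psi> ! l))} = card {u \<in> {1..n}. P u}"
proof -
  have "bij_betw (\<lambda>l. fst (\<psi> ! l)) {l. l < n \<and> P (fst (\<psi> ! l))} {u \<in> {1..n}. P u}"
  proof (rule bij_betw_imageI)
    show "inj_on (\<lambda>l. fst (\<psi> ! l)) {l. l < n \<and> P (fst (\<psi> ! l))}"
      by (auto simp: inj_on_def intro: cp_inj[OF assms])
    show "(\<lambda>l. fst (\<psi> ! l)) ` {l. l < n \<and> P (fst (\<psi> ! l))} = {u \<in> {1..n}. P u}"
    proof
      show "(\<lambda>l. fst (\<psi> ! l)) ` {l. l < n \<and> P (fst (\<psi> ! l))} \<subseteq> {u \<in> {1..n}. P u}"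
        using cp_basic(5)[OF assms] by auto
    next
      show "{u \<in> {1..n}. P u} \<subseteq> (\<lambda>l. fst (\<psi> ! l)) ` {l. l < n \<and> P (fst (\<psi> ! l))}"
      proof
        fix u assume u: "u \<in> {u \<in> {1..n}. P u}"
        then have "u \<in> set (map fst \<psi>)" using cp_basic(3)[OF assms] by auto
        then obtain l where "l < n" "map fst \<psi> ! l = u"
          using in_set_conv_nth cp_basic(1)[OF assms] by (metis length_map)
        then show "u \<in> (\<lambda>l. fst (\<psi> ! l)) ` {l. l < n \<and> P (fst (\<psi> ! l))}"
          using u cp_basic(1)[OF assms] by auto
      qed
    qed
  qed
  then show ?thesis by (rule bij_betw_same_card)
qed

lemma cp_rank:
  assumes "\<psi> \<in> coloured_perms n r" "j < n"
  shows "fst (\<psi> ! j) = Suc (card {l. l < n \<and> fst (\<psi> ! l) < fst (\<psi> ! j)})"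
proof -
  have v: "fst (\<psi> ! j) \<in> {1..n}" using cp_basic(5)[OF assms] .
  have "{u \<in> {1..n}. u < fst (\<psi> ! j)} = {1..<fst (\<psi> ! j)}" using v by auto
  then show ?thesis using cp_count[OF assms(1), of "\<lambda>u. u < fst (\<psi> ! j)"] v by simp
qed

lemma cp_eq:
  assumes "\<psi>1 \<in> coloured_perms k r" "\<psi>2 \<in> coloured_perms k r"
    and "\<forall>j<k. \<forall>l<k. (fst (\<psi>1 ! j) < fst (\<psi>1 ! l) \<longleftrightarrow> fst (\<psi>2 ! j) < fst (\<psi>2 ! l))"
    and "\<forall>j<k. snd (\<psi>1 ! j) = snd (\<psi>2 ! j)"
  shows "\<psi>1 = \<psi>2"
proof (rule nth_equalityI)
  show "length \<psi>1 = length \<psi>2" using cp_basic(1)[OF assms(1)] cp_basic(1)[OF assms(2)] by simp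
next
  fix j assume "j < length \<psi>1"
  then have j: "j < k" using cp_basic(1)[OF assms(1)] by simp
  have "{l. l < k \<and> fst (\<psi>1 ! l) < fst (\<psi>1 ! j)} = {l. l < k \<and> fst (\<psi>2 ! l) < fst (\<psi>2 ! j)}"
    using assms(3) j by auto
  then have "fst (\<psi>1 ! j) = fst (\<psi>2 ! j)"
    using cp_rank[OF assms(1) j] cp_rank[OF assms(2) j] by simp
  then show "\<psi>1 ! j = \<psi>2 ! j" using assms(4) j by (simp add: prod_eq_iff)
qed

lemma sorted_gap:
  assumes "sorted_wrt (<) xs" "i \<le> j" "j < length xs"
  shows "xs ! i + (j - i) \<le> xs ! j"
  using assms(2,3)
proof (induction j)
  case 0 then show ?case by simp
next
  case (Suc j)
  show ?case
  proof (cases "i = Suc j")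
    case True then show ?thesis by simp
  next
    case False
    then have "xs ! i + (j - i) \<le> xs ! j" using Suc by simp
    moreover have "xs ! j < xs ! Suc j" using assms(1) Suc.prems sorted_wrt_nth_less by fastforce
    ultimately show ?thesis using False Suc.prems by linarith
  qed
qed

lemma sorted_interval:
  assumes "sorted_wrt (<) xs" "length xs = k" "k \<ge> 1" "xs ! 0 = a" "\<forall>x\<in>set xs. x < a + k"
  shows "xs = [a..<a+k]"
proof (rule nth_equalityI)
  show "length xs = length [a..<a+k]" using assms by simp
next
  fix j assume j: "j < length xs"
  have "xs ! 0 + j \<le> xs ! j" using sorted_gap[OF assms(1), of 0 j] j by simp
  moreover have "xs ! j + (k - 1 - j) \<le> xs ! (k - 1)" using sorted_gap[OF assms(1), of j "k - 1"] j assms by simp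
  moreover have "xs ! (k - 1) < a + k" using assms nth_mem[of "k - 1" xs] by auto
  ultimately have "xs ! j = a + j" using assms j by linarith
  then show "xs ! j = [a..<a+k] ! j" using j assms by simp
qed

lemma occ_basic:
  assumes "is \<in> occurrences \<tau> \<psi>"
  shows "length is = length \<tau>" "sorted_wrt (<) is" "\<And>x. x \<in> set is \<Longrightarrow> x < length \<psi>"
    "\<And>j l. j < length \<tau> \<Longrightarrow> l < length \<tau> \<Longrightarrow>
       (fst (\<psi> ! (is ! j)) < fst (\<psi> ! (is ! l)) \<longleftrightarrow> fst (\<tau> ! j) < fst (\<tau> ! l))"
    "\<And>j. j < length \<tau> \<Longrightarrow> snd (\<psi> ! (is ! j)) = snd (\<tau> ! j)"
  using assms unfolding occurrences_def by auto

lemma occ_good: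
  assumes T: "\<tau> \<in> T_set k r m I" and k: "1 \<le> k" and occ: "is \<in> occurrences \<tau> \<psi>"
    and psi: "\<psi> \<in> coloured_perms n r"
  shows "good I m k \<psi> (is ! 0)"
proof -
  have tau: "\<tau> \<in> coloured_perms k r" and m: "fst (hd \<tau>) = m" and c: "snd (hd \<tau>) \<in> I"
    using T unfolding T_set_def by auto
  have lt: "length \<tau> = k" using cp_basic(1)[OF tau] .
  have li: "length is = k" using occ_basic(1)[OF occ] lt by simp
  have ln: "length \<psi> = n" using cp_basic(1)[OF psi] .
  have hd: "hd \<tau> = \<tau> ! 0" using lt k by (intro hd_conv_nth) auto
  have srt: "sorted_wrt (<) is" using occ_basic(2)[OF occ] .
  have dist: "distinct is" using srt by (simp add: strict_sorted_iff)
  have i0: "is ! 0 < n" using occ_basic(3)[OF occ, of "is ! 0"] li k ln by simp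
  have col: "snd (\<psi> ! (is ! 0)) \<in> I" using occ_basic(5)[OF occ, of 0] lt k c hd by simp
  have m0: "fst (\<tau> ! 0) = m" using m hd by simp
  have injis: "inj_on (\<lambda>l. is ! l) A" if "A \<subseteq> {..<k}" for A
    using that nth_eq_iff_index_eq[OF dist] li by (auto simp: inj_on_def)
  have fin_s: "finite (smaller \<psi> (is ! 0))" unfolding smaller_def by auto
  have fin_l: "finite (larger \<psi> (is ! 0))" unfolding larger_def by auto
  define A where "A = {l. l < k \<and> fst (\<tau> ! l) < fst (\<tau> ! 0)}"
  have cA: "card A = m - 1" using cp_rank[OF tau, of 0] k m0 unfolding A_def by simp
  have "(\<lambda>l. is ! l) ` A \<subseteq> smaller \<psi> (is ! 0)"
  proof
    fix x assume "x \<in> (\<lambda>l. is ! l) ` A"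
    then obtain l where l: "l < k" "fst (\<tau> ! l) < fst (\<tau> ! 0)" "x = is ! l" unfolding A_def by auto
    have "l \<noteq> 0" using l(2) by (metis less_irrefl)
    then have "is ! 0 < is ! l" using srt l li sorted_wrt_nth_less by fastforce
    moreover have "is ! l < length \<psi>" using occ_basic(3)[OF occ, of "is ! l"] l li by simp
    moreover have "fst (\<psi> ! (is ! l)) < fst (\<psi> ! (is ! 0))" using occ_basic(4)[OF occ, of l 0] l lt k by simp
    ultimately show "x \<in> smaller \<psi> (is ! 0)" unfolding smaller_def using l by simp
  qed
  then have s: "m - 1 \<le> card (smaller \<psi> (is ! 0))"
    using card_inj_on_le[OF injis _ fin_s, of A] cA unfolding A_def by auto
  define B where "B = {l. l < k \<and> fst (\<tau> ! 0) < fst (\<tau> ! l)}"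
  have "{u \<in> {1..k}. m < u} = {m+1..k}" by auto
  then have cB: "card B = k - m" using cp_count[OF tau, of "\<lambda>u. m < u"] m0 unfolding B_def by simp
  have "(\<lambda>l. is ! l) ` B \<subseteq> larger \<psi> (is ! 0)"
  proof
    fix x assume "x \<in> (\<lambda>l. is ! l) ` B"
    then obtain l where l: "l < k" "fst (\<tau> ! 0) < fst (\<tau> ! l)" "x = is ! l" unfolding B_def by auto
    have "l \<noteq> 0" using l(2) by (metis less_irrefl)
    then have "is ! 0 < is ! l" using srt l li sorted_wrt_nth_less by fastforce
    moreover have "is ! l < length \<psi>" using occ_basic(3)[OF occ, of "is ! l"] l li by simp
    moreover have "fst (\<psi> ! (is ! 0)) < fst (\<psi> ! (is ! l))" using occ_basic(4)[OF occ, of 0 l] l lt k by simp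
    ultimately show "x \<in> larger \<psi> (is ! 0)" unfolding larger_def using l by simp
  qed
  then have b: "k - m \<le> card (larger \<psi> (is ! 0))"
    using card_inj_on_le[OF injis _ fin_l, of B] cB unfolding B_def by auto
  show ?thesis unfolding good_def using i0 ln col s b by simp
qed

lemma occ_pattern_unique:
  assumes "\<tau>1 \<in> coloured_perms k r" "\<tau>2 \<in> coloured_perms k r"
    "is \<in> occurrences \<tau>1 \<psi>" "is \<in> occurrences \<tau>2 \<psi>"
  shows "\<tau>1 = \<tau>2"
proof (rule cp_eq[OF assms(1,2)])
  have l1: "length \<tau>1 = k" "length \<tau>2 = k" using cp_basic(1) assms(1,2) by auto
  show "\<forall>j<k. \<forall>l<k. (fst (\<tau>1 ! j) < fst (\<tau>1 ! l)) = (fst (\<tau>2 ! j) < fst (\<tau>2 ! l))"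
    using occ_basic(4)[OF assms(3)] occ_basic(4)[OF assms(4)] l1 by auto
  show "\<forall>j<k. snd (\<tau>1 ! j) = snd (\<tau>2 ! j)"
    using occ_basic(5)[OF assms(3)] occ_basic(5)[OF assms(4)] l1 by auto
qed

lemma occ_at_end:
  assumes psi: "\<psi> \<in> coloured_perms n r" and T: "\<tau> \<in> T_set k r m I" and occ: "is \<in> occurrences \<tau> \<psi>"
    and ng: "\<forall>i<n-k. \<not> good I m k \<psi> i" and k: "1 \<le> k"
  shows "is = [n-k..<n]"
proof -
  have tau: "\<tau> \<in> coloured_perms k r" using T unfolding T_set_def by auto
  have li: "length is = k" using occ_basic(1)[OF occ] cp_basic(1)[OF tau] by simp
  have ln: "length \<psi> = n" using cp_basic(1)[OF psi] .
  have srt: "sorted_wrt (<) is" using occ_basic(2)[OF occ] .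
  have g: "good I m k \<psi> (is ! 0)" using occ_good[OF T k occ psi] .
  then have a1: "n - k \<le> is ! 0" using ng by (meson not_le)
  have "is ! 0 + (k - 1 - 0) \<le> is ! (k - 1)" using sorted_gap[OF srt, of 0 "k - 1"] li k by simp
  moreover have "is ! (k - 1) < n" using occ_basic(3)[OF occ, of "is ! (k - 1)"] li k ln by simp
  ultimately have a2: "is ! 0 + k \<le> n" using k by linarith
  then have eq: "is ! 0 = n - k" using a1 by linarith
  have "\<forall>x\<in>set is. x < is ! 0 + k" using occ_basic(3)[OF occ] ln a2 eq by auto
  then have "is = [is ! 0..<is ! 0 + k]" using sorted_interval[OF srt li k refl] by simp
  then show ?thesis using eq a2 by simp
qed

lemma construct:
  assumes psi: "\<psi> \<in> coloured_perms n r" and i: "i < n" and ci: "snd (\<psi> ! i) \<in> I"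
    and Sm: "Sm \<subseteq> smaller \<psi> i" "card Sm = m - 1"
    and Lg: "Lg \<subseteq> larger \<psi> i" "card Lg = k - m" and m: "1 \<le> m" "m \<le> k"
  shows "\<exists>\<tau> \<in> T_set k r m I. sorted_list_of_set (insert i (Sm \<union> Lg)) \<in> occurrences \<tau> \<psi>"
proof -
  define J where "J = insert i (Sm \<union> Lg)"
  have ln: "length \<psi> = n" using cp_basic(1)[OF psi] .
  have Jsub: "J \<subseteq> {..<n}" using Sm Lg i ln unfolding J_def smaller_def larger_def by auto
  have finJ: "finite J" using Jsub finite_subset by blast
  have finS: "finite Sm" "finite Lg" using finJ unfolding J_def by auto
  have disj: "Sm \<inter> Lg = {}"
  proof -
    { fix x assume "x \<in> Sm" "x \<in> Lg"
      then have "fst (\<psi> ! x) < fst (\<psi> ! i)" "fst (\<psi> ! i) < fst (\<psi> ! x)"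
        using Sm(1) Lg(1) unfolding smaller_def larger_def by auto
      then have False by simp }
    then show ?thesis by auto
  qed
  have iS: "i \<notin> Sm \<union> Lg" using Sm Lg unfolding smaller_def larger_def by auto
  have cJ: "card J = k" unfolding J_def using finS disj iS Sm Lg m
    by (simp add: card_Un_disjoint)
  define "is" where "is = sorted_list_of_set J"
  have set_is: "set is = J" using finJ unfolding is_def by simp
  have len_is: "length is = k" using cJ finJ unfolding is_def by simp
  have srt: "sorted_wrt (<) is" unfolding is_def by simp
  have k1: "k \<ge> 1" using m by simp
  have is0: "is ! 0 = i"
  proof -
    have "is ! 0 \<in> set is" using len_is k1 by (intro nth_mem) simp
    then have i0J: "is ! 0 \<in> J" using set_is by simp
    have S1: "Sm \<subseteq> {i<..}" using Sm(1) unfolding smaller_def by auto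
    have L1: "Lg \<subseteq> {i<..}" using Lg(1) unfolding larger_def by auto
    have "J \<subseteq> {i..}" unfolding J_def using S1 L1 by auto
    then have a: "i \<le> is ! 0" using i0J by auto
    have "i \<in> set is" using set_is unfolding J_def by simp
    then obtain j where j: "j < k" "is ! j = i" using len_is by (metis in_set_conv_nth)
    have "is ! 0 \<le> is ! j" using sorted_gap[OF srt, of 0 j] j len_is by simp
    then show ?thesis using a j by simp
  qed
  have vdist: "\<And>p q. p \<in> J \<Longrightarrow> q \<in> J \<Longrightarrow> fst (\<psi> ! p) = fst (\<psi> ! q) \<Longrightarrow> p = q"
    using cp_inj[OF psi] Jsub by blast
  define rk where "rk p = Suc (card {q \<in> J. fst (\<psi> ! q) < fst (\<psi> ! p)})" for p
  have rk_mono: "fst (\<psi> ! p) < fst (\<psi> ! q) \<longleftrightarrow> rk p < rk q" if "p \<in> J" "q \<in> J" for p q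
  proof
    assume lt: "fst (\<psi> ! p) < fst (\<psi> ! q)"
    have "{x \<in> J. fst (\<psi> ! x) < fst (\<psi> ! p)} \<subset> {x \<in> J. fst (\<psi> ! x) < fst (\<psi> ! q)}"
      using lt that by auto
    then show "rk p < rk q" unfolding rk_def using finJ by (simp add: psubset_card_mono)
  next
    assume lt: "rk p < rk q"
    show "fst (\<psi> ! p) < fst (\<psi> ! q)"
    proof (rule ccontr)
      assume "\<not> fst (\<psi> ! p) < fst (\<psi> ! q)"
      then have "{x \<in> J. fst (\<psi> ! x) < fst (\<psi> ! q)} \<subseteq> {x \<in> J. fst (\<psi> ! x) < fst (\<psi> ! p)}"
        by auto
      then have "rk q \<le> rk p" unfolding rk_def using finJ by (simp add: card_mono)
      then show False using lt by simp
    qed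
  qed
  have rk_inj: "inj_on rk J"
  proof (rule inj_onI)
    fix p q assume pq: "p \<in> J" "q \<in> J" "rk p = rk q"
    then have "\<not> fst (\<psi> ! p) < fst (\<psi> ! q)" "\<not> fst (\<psi> ! q) < fst (\<psi> ! p)"
      using rk_mono[OF pq(1,2)] rk_mono[OF pq(2,1)] pq(3) by simp_all
    then show "p = q" using vdist pq by simp
  qed
  have rk_range: "rk ` J \<subseteq> {1..k}"
  proof
    fix y assume "y \<in> rk ` J"
    then obtain p where p: "p \<in> J" "y = rk p" by auto
    have "{x \<in> J. fst (\<psi> ! x) < fst (\<psi> ! p)} \<subset> J" using p by auto
    then have "card {x \<in> J. fst (\<psi> ! x) < fst (\<psi> ! p)} < k" using cJ finJ psubset_card_mono by metis
    then show "y \<in> {1..k}" using p unfolding rk_def by simp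
  qed
  have rk_img: "rk ` J = {1..k}"
    using rk_range card_image[OF rk_inj] cJ by (intro card_subset_eq) auto
  define \<tau> where "\<tau> = map (\<lambda>p. (rk p, snd (\<psi> ! p))) is"
  have lt: "length \<tau> = k" unfolding \<tau>_def using len_is by simp
  have tau_nth: "\<tau> ! j = (rk (is ! j), snd (\<psi> ! (is ! j)))" if "j < k" for j
    unfolding \<tau>_def using that len_is by simp
  have dist_is: "distinct is" using srt by (simp add: strict_sorted_iff)
  have "\<tau> \<in> coloured_perms k r"
    unfolding coloured_perms_def
  proof (intro CollectI conjI ballI)
    show "length \<tau> = k" by (rule lt)
    have "map fst \<tau> = map rk is" unfolding \<tau>_def by simp
    then show "distinct (map fst \<tau>)" using dist_is rk_inj set_is by (simp add: distinct_map)
    show "set (map fst \<tau>) = {1..k}" using \<open>map fst \<tau> = map rk is\<close> set_is rk_img by simp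
    fix x assume "x \<in> set \<tau>"
    then obtain p where "p \<in> J" "x = (rk p, snd (\<psi> ! p))" unfolding \<tau>_def using set_is by auto
    then show "snd x \<in> {1..r}" using cp_basic(4)[OF psi] Jsub by auto
  qed
  moreover have "fst (hd \<tau>) = m"
  proof -
    have "hd \<tau> = \<tau> ! 0" using lt k1 by (intro hd_conv_nth) auto
    then have "fst (hd \<tau>) = rk i" using tau_nth[of 0] k1 is0 by simp
    moreover have "{q \<in> J. fst (\<psi> ! q) < fst (\<psi> ! i)} = Sm"
      using Sm Lg unfolding J_def smaller_def larger_def by auto
    ultimately show ?thesis unfolding rk_def using Sm m by simp
  qed
  moreover have "snd (hd \<tau>) \<in> I"
  proof -
    have "hd \<tau> = \<tau> ! 0" using lt k1 by (intro hd_conv_nth) auto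
    then show ?thesis using tau_nth[of 0] k1 is0 ci by simp
  qed
  ultimately have T: "\<tau> \<in> T_set k r m I" unfolding T_set_def by simp
  have "is \<in> occurrences \<tau> \<psi>"
    unfolding occurrences_def
  proof (intro CollectI conjI allI impI ballI)
    show "length is = length \<tau>" using lt len_is by simp
    show "sorted_wrt (<) is" by (rule srt)
    show "x < length \<psi>" if "x \<in> set is" for x using that set_is Jsub ln by auto
    fix j assume j: "j < length \<tau>"
    then have jJ: "is ! j \<in> J" using set_is len_is lt nth_mem by fastforce
    show "snd (\<psi> ! (is ! j)) = snd (\<tau> ! j)" using tau_nth j lt by simp
    fix l assume l: "l < length \<tau>"
    then have lJ: "is ! l \<in> J" using set_is len_is lt nth_mem by fastforce
    show "(fst (\<psi> ! (is ! j)) < fst (\<psi> ! (is ! l))) = (fst (\<tau> ! j) < fst (\<tau> ! l))"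
      using tau_nth j l lt rk_mono[OF jJ lJ] by simp
  qed
  then show ?thesis using T unfolding is_def J_def by blast
qed

lemma two_subsets:
  assumes "finite X" "c < card X" "1 \<le> c"
  obtains A B where "A \<subseteq> X" "B \<subseteq> X" "card A = c" "card B = c" "A \<noteq> B"
proof -
  obtain Y where Y: "Y \<subseteq> X" "card Y = Suc c" using obtain_subset_with_card_n[of "Suc c" X] assms by auto
  have fY: "finite Y" using Y(1) assms(1) finite_subset by blast
  have "Y \<noteq> {}" using Y by auto
  then obtain x where x: "x \<in> Y" by auto
  have "card (Y - {x}) = c" using Y x fY by simp
  then have "Y - {x} \<noteq> {}" using assms(3) by (metis card.empty not_one_le_zero)
  then obtain y where y: "y \<in> Y - {x}" by auto
  then have xy: "x \<in> Y" "y \<in> Y" "x \<noteq> y" using x by auto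
  show ?thesis
  proof
    show "Y - {x} \<subseteq> X" "Y - {y} \<subseteq> X" using Y by auto
    show "card (Y - {x}) = c" "card (Y - {y}) = c" using Y xy fY by auto
    show "Y - {x} \<noteq> Y - {y}" using xy by auto
  qed
qed

definition Cset :: "nat set \<Rightarrow> nat \<Rightarrow> nat \<Rightarrow> nat \<Rightarrow> (nat \<times> nat) list \<Rightarrow> nat \<Rightarrow> (nat \<times> nat) list set" where
  "Cset I m k r \<phi> n = {\<psi> \<in> coloured_perms n r. (\<forall>i<n-k. \<not> good I m k \<psi> i) \<and> [n-k..<n] \<in> occurrences \<phi> \<psi>}"

lemma C_imp_S:
  assumes "\<psi> \<in> Cset I m k r \<phi> n" and phi: "\<phi> \<in> T_set k r m I" and k: "1 \<le> k"
  shows "\<psi> \<in> S_set n r (T_set k r m I) \<phi>"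
proof -
  have psi: "\<psi> \<in> coloured_perms n r" and ng: "\<forall>i<n-k. \<not> good I m k \<psi> i"
    and oc: "[n-k..<n] \<in> occurrences \<phi> \<psi>" using assms(1) unfolding Cset_def by auto
  have phik: "\<phi> \<in> coloured_perms k r" using phi unfolding T_set_def by auto
  have key: "is = [n-k..<n] \<and> \<tau> = \<phi>" if "\<tau> \<in> T_set k r m I" "is \<in> occurrences \<tau> \<psi>" for \<tau> "is"
  proof -
    have e: "is = [n-k..<n]" using occ_at_end[OF psi that(1) that(2) ng k] .
    have "\<tau> \<in> coloured_perms k r" using that(1) unfolding T_set_def by auto
    then have "\<tau> = \<phi>" using occ_pattern_unique[OF _ phik, of \<tau> "[n-k..<n]" \<psi>] that(2) e oc by simp
    then show ?thesis using e by simp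
  qed
  have "\<forall>\<tau>\<in>T_set k r m I - {\<phi>}. avoids \<psi> \<tau>"
    unfolding avoids_def contains_def using key by blast
  moreover have "occurrences \<phi> \<psi> = {[n-k..<n]}" using key[OF phi] oc by blast
  ultimately show ?thesis unfolding S_set_def contains_once_def using psi by simp
qed

lemma S_imp_C:
  assumes S: "\<psi> \<in> S_set n r (T_set k r m I) \<phi>" and phi: "\<phi> \<in> T_set k r m I"
    and m: "2 \<le> m" "m \<le> k - 1"
  shows "\<psi> \<in> Cset I m k r \<phi> n"
proof -
  have k: "1 \<le> k" "m \<le> k" using m by auto
  have psi: "\<psi> \<in> coloured_perms n r" and av: "\<forall>\<tau>\<in>T_set k r m I - {\<phi>}. avoids \<psi> \<tau>"
    and once: "card (occurrences \<phi> \<psi>) = 1"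
    using S unfolding S_set_def contains_once_def by auto
  obtain is0 where is0: "occurrences \<phi> \<psi> = {is0}" using once card_1_singletonE by blast
  have allphi: "js = is0" if "\<tau> \<in> T_set k r m I" "js \<in> occurrences \<tau> \<psi>" for \<tau> js
  proof (cases "\<tau> = \<phi>")
    case True then show ?thesis using that is0 by auto
  next
    case False
    then have "avoids \<psi> \<tau>" using av that(1) by auto
    then show ?thesis using that(2) unfolding avoids_def contains_def by auto
  qed
  have ln: "length \<psi> = n" using cp_basic(1)[OF psi] .
  have ng: "\<forall>i<n-k. \<not> good I m k \<psi> i"
  proof (intro allI impI notI)
    fix i assume i: "i < n - k" and g: "good I m k \<psi> i"
    define S where "S = smaller \<psi> i"
    define L where "L = larger \<psi> i"
    have gS: "m - 1 \<le> card S" and gL: "k - m \<le> card L" and ci: "snd (\<psi> ! i) \<in> I"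
      using g unfolding good_def S_def L_def by auto
    have finS: "finite S" "finite L" unfolding S_def L_def smaller_def larger_def by auto
    have SL: "S \<union> L = {i<..<n}"
    proof
      show "S \<union> L \<subseteq> {i<..<n}" unfolding S_def L_def smaller_def larger_def using ln by auto
      show "{i<..<n} \<subseteq> S \<union> L"
      proof
        fix j assume j: "j \<in> {i<..<n}"
        then have "fst (\<psi> ! j) \<noteq> fst (\<psi> ! i)" using cp_inj[OF psi, of j i] i by auto
        then show "j \<in> S \<union> L" using j ln unfolding S_def L_def smaller_def larger_def by auto
      qed
    qed
    have dSL: "S \<inter> L = {}" unfolding S_def L_def smaller_def larger_def by auto
    have "card S + card L = n - Suc i" using card_Un_disjoint[OF finS dSL] SL by simp
    then have big: "m - 1 < card S \<or> k - m < card L" using i m by linarith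
    have iS: "i \<notin> S" "i \<notin> L" unfolding S_def L_def smaller_def larger_def by auto
    have i_n: "i < n" using i by simp
    have m1: "1 \<le> m" "1 \<le> m - 1" "1 \<le> k - m" using m by auto
    show False
    proof (cases "m - 1 < card S")
      case True
      obtain A B where AB: "A \<subseteq> S" "B \<subseteq> S" "card A = m - 1" "card B = m - 1" "A \<noteq> B"
        using two_subsets[OF finS(1) True m1(2)] by blast
      obtain L0 where L0: "L0 \<subseteq> L" "card L0 = k - m"
        using obtain_subset_with_card_n[OF gL] by auto
      obtain \<tau>1 where t1: "\<tau>1 \<in> T_set k r m I" "sorted_list_of_set (insert i (A \<union> L0)) \<in> occurrences \<tau>1 \<psi>"
        using construct[OF psi i_n ci AB(1)[unfolded S_def] AB(3) L0(1)[unfolded L_def] L0(2) m1(1) k(2)] by blast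
      obtain \<tau>2 where t2: "\<tau>2 \<in> T_set k r m I" "sorted_list_of_set (insert i (B \<union> L0)) \<in> occurrences \<tau>2 \<psi>"
        using construct[OF psi i_n ci AB(2)[unfolded S_def] AB(4) L0(1)[unfolded L_def] L0(2) m1(1) k(2)] by blast
      have eq: "sorted_list_of_set (insert i (A \<union> L0)) = sorted_list_of_set (insert i (B \<union> L0))"
        using allphi[OF t1] allphi[OF t2] by simp
      have fA: "finite (insert i (A \<union> L0))" "finite (insert i (B \<union> L0))"
        using AB L0 finS finite_subset by auto
      have "insert i (A \<union> L0) = insert i (B \<union> L0)"
        using arg_cong[OF eq, of set] fA by (metis set_sorted_list_of_set)
      then have "insert i (A \<union> L0) \<inter> S = insert i (B \<union> L0) \<inter> S" by simp
      moreover have "insert i (A \<union> L0) \<inter> S = A" using AB L0 iS dSL by auto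
      moreover have "insert i (B \<union> L0) \<inter> S = B" using AB L0 iS dSL by auto
      ultimately show False using AB by simp
    next
      case False
      then have True: "k - m < card L" using big by simp
      obtain A B where AB: "A \<subseteq> L" "B \<subseteq> L" "card A = k - m" "card B = k - m" "A \<noteq> B"
        using two_subsets[OF finS(2) True m1(3)] by blast
      obtain S0 where S0: "S0 \<subseteq> S" "card S0 = m - 1"
        using obtain_subset_with_card_n[OF gS] by auto
      obtain \<tau>1 where t1: "\<tau>1 \<in> T_set k r m I" "sorted_list_of_set (insert i (S0 \<union> A)) \<in> occurrences \<tau>1 \<psi>"
        using construct[OF psi i_n ci S0(1)[unfolded S_def] S0(2) AB(1)[unfolded L_def] AB(3) m1(1) k(2)] by blast
      obtain \<tau>2 where t2: "\<tau>2 \<in> T_set k r m I" "sorted_list_of_set (insert i (S0 \<union> B)) \<in> occurrences \<tau>2 \<psi>"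
        using construct[OF psi i_n ci S0(1)[unfolded S_def] S0(2) AB(2)[unfolded L_def] AB(4) m1(1) k(2)] by blast
      have eq: "sorted_list_of_set (insert i (S0 \<union> A)) = sorted_list_of_set (insert i (S0 \<union> B))"
        using allphi[OF t1] allphi[OF t2] by simp
      have fA: "finite (insert i (S0 \<union> A))" "finite (insert i (S0 \<union> B))"
        using AB S0 finS finite_subset by auto
      have "insert i (S0 \<union> A) = insert i (S0 \<union> B)"
        using arg_cong[OF eq, of set] fA by (metis set_sorted_list_of_set)
      then have "insert i (S0 \<union> A) \<inter> L = insert i (S0 \<union> B) \<inter> L" by simp
      moreover have "insert i (S0 \<union> A) \<inter> L = A" using AB S0 iS dSL by auto
      moreover have "insert i (S0 \<union> B) \<inter> L = B" using AB S0 iS dSL by auto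
      ultimately show False using AB by simp
    qed
  qed
  have "is0 \<in> occurrences \<phi> \<psi>" using is0 by simp
  then have "is0 = [n-k..<n]" using occ_at_end[OF psi phi _ ng k(1)] by simp
  then show ?thesis unfolding Cset_def using psi ng is0 by simp
qed

lemma S_eq_C:
  assumes phi: "\<phi> \<in> T_set k r m I" and m: "2 \<le> m" "m \<le> k - 1"
  shows "S_set n r (T_set k r m I) \<phi> = Cset I m k r \<phi> n"
proof (intro set_eqI iffI)
  fix \<psi> assume "\<psi> \<in> S_set n r (T_set k r m I) \<phi>"
  then show "\<psi> \<in> Cset I m k r \<phi> n" using S_imp_C[OF _ phi m] by blast
next
  fix \<psi> assume "\<psi> \<in> Cset I m k r \<phi> n"
  moreover have "1 \<le> k" using m by simp
  ultimately show "\<psi> \<in> S_set n r (T_set k r m I) \<phi>" using C_imp_S[OF _ phi] by blast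
qed

definition lift :: "nat \<Rightarrow> nat \<Rightarrow> nat" where
  "lift a v = (if a \<le> v then Suc v else v)"

definition pre :: "nat \<times> nat \<Rightarrow> (nat \<times> nat) list \<Rightarrow> (nat \<times> nat) list" where
  "pre x \<psi> = x # map (\<lambda>(v, c). (lift (fst x) v, c)) \<psi>"

lemma lift_less[simp]: "lift a u < lift a w \<longleftrightarrow> u < w"
  unfolding lift_def by auto

lemma lift_eq[simp]: "lift a u = lift a w \<longleftrightarrow> u = w"
  unfolding lift_def by auto

lemma pre_nth_Suc: "j < length \<psi> \<Longrightarrow> pre x \<psi> ! Suc j = (lift (fst x) (fst (\<psi> ! j)), snd (\<psi> ! j))"
  unfolding pre_def by (simp add: case_prod_beta)

lemma pre_len[simp]: "length (pre x \<psi>) = Suc (length \<psi>)"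
  unfolding pre_def by simp

lemma pre_cp:
  assumes psi: "\<psi> \<in> coloured_perms n r" and a: "a \<in> {1..Suc n}" and c: "c \<in> {1..r}"
  shows "pre (a, c) \<psi> \<in> coloured_perms (Suc n) r"
proof -
  have mf: "map fst (pre (a, c) \<psi>) = a # map (lift a) (map fst \<psi>)"
    unfolding pre_def by (simp add: case_prod_beta)
  have injl: "inj (lift a)" by (simp add: inj_def)
  have im: "lift a ` {1..n} = {1..Suc n} - {a}"
  proof
    show "lift a ` {1..n} \<subseteq> {1..Suc n} - {a}" unfolding lift_def by auto
    show "{1..Suc n} - {a} \<subseteq> lift a ` {1..n}"
    proof
      fix u assume u: "u \<in> {1..Suc n} - {a}"
      show "u \<in> lift a ` {1..n}"
      proof (cases "u < a")
        case True then have "lift a u = u" unfolding lift_def by simp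
        then show ?thesis using u True a by (metis Diff_iff atLeastAtMost_iff image_eqI le_SucE not_less)
      next
        case False then have "lift a (u - 1) = u" using u a unfolding lift_def by auto
        moreover have "u - 1 \<in> {1..n}" using False u a by auto
        ultimately show ?thesis by (metis image_eqI)
      qed
    qed
  qed
  have "distinct (map fst (pre (a, c) \<psi>))"
  proof -
    have "a \<notin> set (map (lift a) (map fst \<psi>))" using im cp_basic(3)[OF psi] by auto
    moreover have "distinct (map (lift a) (map fst \<psi>))"
      using distinct_map[THEN iffD2, OF conjI[OF cp_basic(2)[OF psi] inj_on_subset[OF injl subset_UNIV]]] .
    ultimately show ?thesis using mf by simp
  qed
  moreover have "set (map fst (pre (a, c) \<psi>)) = {1..Suc n}"
  proof -
    have "set (map fst (pre (a, c) \<psi>)) = insert a (lift a ` {1..n})"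
      by (simp only: mf list.set(2) set_map[of "lift a"] cp_basic(3)[OF psi])
    then show ?thesis using im a by auto
  qed
  moreover have "\<forall>x\<in>set (pre (a, c) \<psi>). snd x \<in> {1..r}"
    using psi c unfolding pre_def coloured_perms_def by auto
  ultimately show ?thesis using cp_basic(1)[OF psi] unfolding coloured_perms_def by simp
qed

lemma cp_decomp:
  assumes psi: "\<psi> \<in> coloured_perms (Suc n) r"
  obtains a c \<psi>' where "\<psi> = pre (a, c) \<psi>'" "\<psi>' \<in> coloured_perms n r" "a \<in> {1..Suc n}" "c \<in> {1..r}"
proof -
  obtain a c t where e: "\<psi> = (a, c) # t"
    using cp_basic(1)[OF psi] by (cases \<psi>) auto
  define unl where "unl v = (if a < v then v - 1 else v)" for v
  define \<psi>' where "\<psi>' = map (\<lambda>(v, c). (unl v, c)) t"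
  have dist: "distinct (map fst \<psi>)" and st: "set (map fst \<psi>) = {1..Suc n}"
    using cp_basic(2,3)[OF psi] by auto
  have ta: "a \<notin> fst ` set t" using dist e by auto
  have tset: "fst ` set t = {1..Suc n} - {a}" using st dist e by auto
  have a: "a \<in> {1..Suc n}" using st e by auto
  have c: "c \<in> {1..r}" using psi e unfolding coloured_perms_def by auto
  have lu: "lift a (unl v) = v" if "v \<noteq> a" for v using that unfolding lift_def unl_def by auto
  have "map (\<lambda>(v, c). (lift a v, c)) \<psi>' = t"
    unfolding \<psi>'_def using ta lu by (induction t) (auto simp: case_prod_beta)
  then have eq: "\<psi> = pre (a, c) \<psi>'" unfolding pre_def e by simp
  have injU: "inj_on unl ({1..Suc n} - {a})"
    unfolding inj_on_def unl_def by auto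
  have imU: "unl ` ({1..Suc n} - {a}) = {1..n}"
  proof
    show "unl ` ({1..Suc n} - {a}) \<subseteq> {1..n}" unfolding unl_def using a by auto
    show "{1..n} \<subseteq> unl ` ({1..Suc n} - {a})"
    proof
      fix u assume u: "u \<in> {1..n}"
      show "u \<in> unl ` ({1..Suc n} - {a})"
      proof (cases "u < a")
        case True then show ?thesis using u unfolding unl_def by (intro image_eqI[of _ _ u]) auto
      next
        case False then show ?thesis using u unfolding unl_def by (intro image_eqI[of _ _ "Suc u"]) auto
      qed
    qed
  qed
  have mf: "map fst \<psi>' = map unl (map fst t)" unfolding \<psi>'_def by (simp add: case_prod_beta)
  have "distinct (map fst t)" using dist e by simp
  moreover have "inj_on unl (set (map fst t))" using injU tset by simp
  ultimately have "distinct (map fst \<psi>')" unfolding mf distinct_map by blast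
  moreover have "set (map fst \<psi>') = {1..n}"
  proof -
    have "set (map fst \<psi>') = unl ` (fst ` set t)" unfolding mf by (simp only: set_map)
    then show ?thesis using tset imU by simp
  qed
  moreover have "length \<psi>' = n" using cp_basic(1)[OF psi] e unfolding \<psi>'_def by simp
  moreover have "\<forall>x\<in>set \<psi>'. snd x \<in> {1..r}" using psi e unfolding \<psi>'_def coloured_perms_def by auto
  ultimately have "\<psi>' \<in> coloured_perms n r" unfolding coloured_perms_def by simp
  then show ?thesis using that eq a c by blast
qed

lemma pre_inj:
  assumes "pre x \<psi>1 = pre y \<psi>2" shows "x = y \<and> \<psi>1 = \<psi>2"
proof -
  have xy: "x = y" using assms unfolding pre_def by simp
  have "map (\<lambda>(v, c). (lift (fst x) v, c)) \<psi>1 = map (\<lambda>(v, c). (lift (fst x) v, c)) \<psi>2"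
    using assms xy unfolding pre_def by simp
  moreover have "inj (\<lambda>(v, c). (lift (fst x) v, c))" by (auto simp: inj_def)
  ultimately have "\<psi>1 = \<psi>2" using inj_map_eq_map by blast
  then show ?thesis using xy by simp
qed

lemma smaller_pre_Suc: "i < length \<psi> \<Longrightarrow> smaller (pre x \<psi>) (Suc i) = Suc ` smaller \<psi> i"
  unfolding smaller_def
  by (auto simp: pre_nth_Suc image_iff Suc_less_eq2 less_Suc_eq_0_disj)

lemma larger_pre_Suc: "i < length \<psi> \<Longrightarrow> larger (pre x \<psi>) (Suc i) = Suc ` larger \<psi> i"
  unfolding larger_def
  by (auto simp: pre_nth_Suc image_iff Suc_less_eq2 less_Suc_eq_0_disj)

lemma good_pre_Suc: "good I m k (pre x \<psi>) (Suc i) \<longleftrightarrow> good I m k \<psi> i"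
proof (cases "i < length \<psi>")
  case True
  then show ?thesis unfolding good_def
    using smaller_pre_Suc[OF True] larger_pre_Suc[OF True] pre_nth_Suc[OF True]
    by (simp add: card_image)
next
  case False then show ?thesis unfolding good_def by simp
qed

lemma good_pre_0:
  assumes psi: "\<psi> \<in> coloured_perms n r" and a: "a \<in> {1..Suc n}"
  shows "good I m k (pre (a, c) \<psi>) 0 \<longleftrightarrow> c \<in> I \<and> m - 1 \<le> a - 1 \<and> k - m \<le> Suc n - a"
proof -
  have ln: "length \<psi> = n" using cp_basic(1)[OF psi] .
  have p0: "pre (a, c) \<psi> ! 0 = (a, c)" unfolding pre_def by simp
  have s: "smaller (pre (a, c) \<psi>) 0 = Suc ` {l. l < n \<and> fst (\<psi> ! l) < a}"
  proof -
    have "smaller (pre (a, c) \<psi>) 0 = {j. 0 < j \<and> j < Suc n \<and> fst (pre (a, c) \<psi> ! j) < a}"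
      unfolding smaller_def using ln p0 by simp
    also have "\<dots> = Suc ` {l. l < n \<and> fst (\<psi> ! l) < a}"
      using ln by (auto simp: pre_nth_Suc image_iff lift_def gr0_conv_Suc split: if_splits)
    finally show ?thesis .
  qed
  have l: "larger (pre (a, c) \<psi>) 0 = Suc ` {l. l < n \<and> a \<le> fst (\<psi> ! l)}"
  proof -
    have "larger (pre (a, c) \<psi>) 0 = {j. 0 < j \<and> j < Suc n \<and> a < fst (pre (a, c) \<psi> ! j)}"
      unfolding larger_def using ln p0 by simp
    also have "\<dots> = Suc ` {l. l < n \<and> a \<le> fst (\<psi> ! l)}"
      using ln by (auto simp: pre_nth_Suc image_iff lift_def gr0_conv_Suc split: if_splits)
    finally show ?thesis .
  qed
  have cs: "card {l. l < n \<and> fst (\<psi> ! l) < a} = a - 1"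
  proof -
    have "{u \<in> {1..n}. u < a} = {1..<a}" using a by auto
    then show ?thesis using cp_count[OF psi, of "\<lambda>u. u < a"] by simp
  qed
  have cl: "card {l. l < n \<and> a \<le> fst (\<psi> ! l)} = Suc n - a"
  proof -
    have "{u \<in> {1..n}. a \<le> u} = {max 1 a..n}" by auto
    then show ?thesis using cp_count[OF psi, of "\<lambda>u. a \<le> u"] a by auto
  qed
  show ?thesis unfolding good_def using s l cs cl p0 by (simp add: card_image)
qed

lemma occ_pre:
  "map Suc is \<in> occurrences \<tau> (pre x \<psi>) \<longleftrightarrow> is \<in> occurrences \<tau> \<psi>"
proof -
  have b: "(\<forall>i\<in>set (map Suc is). i < length (pre x \<psi>)) \<longleftrightarrow> (\<forall>i\<in>set is. i < length \<psi>)" by simp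
  show ?thesis
  proof
    assume h: "map Suc is \<in> occurrences \<tau> (pre x \<psi>)"
    then have bd: "\<forall>i\<in>set is. i < length \<psi>" using b unfolding occurrences_def by blast
    then have nth: "\<And>j. j < length is \<Longrightarrow> pre x \<psi> ! (map Suc is ! j) = (lift (fst x) (fst (\<psi> ! (is ! j))), snd (\<psi> ! (is ! j)))"
      by (simp add: pre_nth_Suc)
    show "is \<in> occurrences \<tau> \<psi>" using h bd nth unfolding occurrences_def
      by (auto simp: sorted_wrt_map)
  next
    assume h: "is \<in> occurrences \<tau> \<psi>"
    then have bd: "\<forall>i\<in>set is. i < length \<psi>" unfolding occurrences_def by blast
    then have nth: "\<And>j. j < length is \<Longrightarrow> pre x \<psi> ! (map Suc is ! j) = (lift (fst x) (fst (\<psi> ! (is ! j))), snd (\<psi> ! (is ! j)))"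
      by (simp add: pre_nth_Suc)
    show "map Suc is \<in> occurrences \<tau> (pre x \<psi>)" using h bd nth unfolding occurrences_def
      by (auto simp: sorted_wrt_map)
  qed
qed

definition Vset :: "nat set \<Rightarrow> nat \<Rightarrow> nat \<Rightarrow> nat \<Rightarrow> nat \<Rightarrow> (nat \<times> nat) set" where
  "Vset I m k r n = {(a, c). a \<in> {1..Suc n} \<and> c \<in> {1..r} \<and> \<not> (c \<in> I \<and> m - 1 \<le> a - 1 \<and> k - m \<le> Suc n - a)}"

lemma Cset_k:
  assumes phi: "\<phi> \<in> T_set k r m I"
  shows "Cset I m k r \<phi> k = {\<phi>}"
proof -
  have phik: "\<phi> \<in> coloured_perms k r" using phi unfolding T_set_def by auto
  have lp: "length \<phi> = k" using cp_basic(1)[OF phik] .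
  have occ: "[0..<k] \<in> occurrences \<phi> \<psi> \<longleftrightarrow>
      (length \<psi> = k \<longrightarrow> (\<forall>j<k. \<forall>l<k. (fst (\<psi> ! j) < fst (\<psi> ! l)) = (fst (\<phi> ! j) < fst (\<phi> ! l)))
        \<and> (\<forall>j<k. snd (\<psi> ! j) = snd (\<phi> ! j)))" if "length \<psi> = k" for \<psi>
    unfolding occurrences_def using lp that by auto
  show ?thesis
  proof (intro set_eqI iffI)
    fix \<psi> assume "\<psi> \<in> Cset I m k r \<phi> k"
    then have psi: "\<psi> \<in> coloured_perms k r" and o: "[0..<k] \<in> occurrences \<phi> \<psi>"
      unfolding Cset_def by auto
    have "\<psi> = \<phi>" using cp_eq[OF psi phik] occ[of \<psi>] o cp_basic(1)[OF psi] by blast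
    then show "\<psi> \<in> {\<phi>}" by simp
  next
    fix \<psi> assume "\<psi> \<in> {\<phi>}"
    then have e: "\<psi> = \<phi>" by simp
    have "[0..<k] \<in> occurrences \<phi> \<phi>" using occ[of \<phi>] lp by simp
    then show "\<psi> \<in> Cset I m k r \<phi> k" unfolding Cset_def using e phik by simp
  qed
qed

lemma upt_shift: "k \<le> n \<Longrightarrow> [Suc n - k..<Suc n] = map Suc [n-k..<n]"
  by (simp add: map_Suc_upt Suc_diff_le)

lemma Cset_Suc:
  assumes n: "k \<le> n"
  shows "Cset I m k r \<phi> (Suc n) = (\<lambda>(x, \<psi>). pre x \<psi>) ` (Vset I m k r n \<times> Cset I m k r \<phi> n)"
proof (intro set_eqI iffI)
  fix \<psi> assume h: "\<psi> \<in> Cset I m k r \<phi> (Suc n)"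
  then have psi: "\<psi> \<in> coloured_perms (Suc n) r" and ng: "\<forall>i<Suc n - k. \<not> good I m k \<psi> i"
    and o: "[Suc n - k..<Suc n] \<in> occurrences \<phi> \<psi>" unfolding Cset_def by auto
  obtain a c \<psi>' where e: "\<psi> = pre (a, c) \<psi>'" and psi': "\<psi>' \<in> coloured_perms n r"
    and a: "a \<in> {1..Suc n}" and c: "c \<in> {1..r}" using cp_decomp[OF psi] by blast
  have "\<not> good I m k \<psi> 0" using ng n by simp
  then have V: "(a, c) \<in> Vset I m k r n" unfolding Vset_def using good_pre_0[OF psi' a] e a c by simp
  have ng': "\<forall>i<n - k. \<not> good I m k \<psi>' i"
  proof (intro allI impI)
    fix i assume "i < n - k"
    then have "Suc i < Suc n - k" using n by simp
    then have "\<not> good I m k \<psi> (Suc i)" using ng by simp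
    then show "\<not> good I m k \<psi>' i" using good_pre_Suc e by simp
  qed
  have "[n-k..<n] \<in> occurrences \<phi> \<psi>'" using o e occ_pre upt_shift[OF n] by metis
  then have "\<psi>' \<in> Cset I m k r \<phi> n" unfolding Cset_def using psi' ng' by simp
  then show "\<psi> \<in> (\<lambda>(x, \<psi>). pre x \<psi>) ` (Vset I m k r n \<times> Cset I m k r \<phi> n)"
    using V e by force
next
  fix \<psi> assume "\<psi> \<in> (\<lambda>(x, \<psi>). pre x \<psi>) ` (Vset I m k r n \<times> Cset I m k r \<phi> n)"
  then obtain a c \<psi>' where e: "\<psi> = pre (a, c) \<psi>'" and V: "(a, c) \<in> Vset I m k r n"
    and C: "\<psi>' \<in> Cset I m k r \<phi> n" by auto
  have psi': "\<psi>' \<in> coloured_perms n r" and ng': "\<forall>i<n - k. \<not> good I m k \<psi>' i"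
    and o: "[n - k..<n] \<in> occurrences \<phi> \<psi>'" using C unfolding Cset_def by auto
  have a: "a \<in> {1..Suc n}" and c: "c \<in> {1..r}" using V unfolding Vset_def by auto
  have psi: "\<psi> \<in> coloured_perms (Suc n) r" using pre_cp[OF psi' a c] e by simp
  have ng: "\<forall>i<Suc n - k. \<not> good I m k \<psi> i"
  proof (intro allI impI)
    fix i assume i: "i < Suc n - k"
    show "\<not> good I m k \<psi> i"
    proof (cases i)
      case 0 then show ?thesis using good_pre_0[OF psi' a] V e unfolding Vset_def by simp
    next
      case (Suc i')
      then have "i' < n - k" using i n by simp
      then show ?thesis using ng' good_pre_Suc e Suc by simp
    qed
  qed
  have "[Suc n - k..<Suc n] \<in> occurrences \<phi> \<psi>" using o e occ_pre upt_shift[OF n] by metis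
  then show "\<psi> \<in> Cset I m k r \<phi> (Suc n)" unfolding Cset_def using psi ng by simp
qed

lemma card_Vset:
  assumes I: "I \<subseteq> {1..r}" "card I = d" and n: "k \<le> n" and m: "1 \<le> m" "m \<le> k"
  shows "card (Vset I m k r n) = d * (k - 1) + (r - d) * Suc n"
proof -
  define A where "A = {1..Suc n} - {m..Suc n + m - k}"
  have V: "Vset I m k r n = ({1..Suc n} \<times> ({1..r} - I)) \<union> (A \<times> I)"
    unfolding Vset_def A_def using I m n by auto
  have fI: "finite I" using I finite_subset by blast
  have sub: "{m..Suc n + m - k} \<subseteq> {1..Suc n}" using m n by auto
  have cA: "card A = k - 1" unfolding A_def using card_Diff_subset[OF finite_atLeastAtMost sub] m n by simp
  have fA: "finite A" unfolding A_def by simp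
  have disj: "({1..Suc n} \<times> ({1..r} - I)) \<inter> (A \<times> I) = {}" by auto
  have "card (Vset I m k r n) = card ({1..Suc n} \<times> ({1..r} - I)) + card (A \<times> I)"
    unfolding V using disj fI fA by (intro card_Un_disjoint) auto
  also have "\<dots> = Suc n * (r - d) + (k - 1) * d"
    using card_Diff_subset[OF fI I(1)] I cA by (simp add: card_cartesian_product)
  finally show ?thesis by (simp add: mult.commute)
qed

lemma card_Cset:
  assumes phi: "\<phi> \<in> T_set k r m I" and I: "I \<subseteq> {1..r}" "card I = d" and m: "1 \<le> m" "m \<le> k"
    and n: "k \<le> n"
  shows "card (Cset I m k r \<phi> n) = (\<Prod>j = k+1..n. d * (k - 1) + (r - d) * j)"
  using n
proof (induction n rule: dec_induct)
  case base
  then show ?case using Cset_k[OF phi] by simp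
next
  case (step n)
  have inj: "inj_on (\<lambda>(x, \<psi>). pre x \<psi>) (Vset I m k r n \<times> Cset I m k r \<phi> n)"
    by (auto simp: inj_on_def dest: pre_inj)
  have fV: "finite (Vset I m k r n)" unfolding Vset_def
    by (rule finite_subset[of _ "{1..Suc n} \<times> {1..r}"]) auto
  have "card (Cset I m k r \<phi> (Suc n)) = card (Vset I m k r n) * card (Cset I m k r \<phi> n)"
    unfolding Cset_Suc[OF step(1)] card_image[OF inj] card_cartesian_product ..
  then show ?case using step card_Vset[OF I step(1) m] by (simp add: mult.commute)
qed

theorem theorem3:
  fixes r k d n m :: nat and I :: "nat set" and \<phi> :: "(nat \<times> nat) list"
  assumes "r \<ge> 1" and "k \<ge> 3" and "1 \<le> d" and "d \<le> r"
    and "I \<subseteq> {1..r}" and "card I = d"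
    and "n \<ge> k + 1" and "2 \<le> m" and "m \<le> k - 1"
    and "\<phi> \<in> T_set k r m I"
  shows "card (S_set n r (T_set k r m I) \<phi>) = (\<Prod>j = k+1..n. d * (k - 1) + (r - d) * j)"
proof -
  have "S_set n r (T_set k r m I) \<phi> = Cset I m k r \<phi> n"
    using S_eq_C[OF assms(10) assms(8,9)] .
  moreover have "card (Cset I m k r \<phi> n) = (\<Prod>j = k+1..n. d * (k - 1) + (r - d) * j)"
    using card_Cset[OF assms(10) assms(5,6)] assms by simp
  ultimately show ?thesis by simp
qed

end
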